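(* Let $k:\mathbb{N}\to\mathbb{N}$ satisfy $k(n)\to\infty$ as $n\to\infty$ and $k(n)=o(\sqrt{n})$. Then $$g(n,K_3,S_{k(n)+1})\ge (1+o(1))\frac{n\,k(n)^2}{48}.$$
   Context: Constructor-Blocker game: given graphs $H$ and $F$, two players, Constructor and Blocker, alternately claim previously unclaimed edges of the complete graph $K_n$, Constructor moving first. Constructor may only claim an edge if her graph (the edges she has claimed) remains $F$-free (contains no subgraph isomorphic to $F$); Blocker may claim any unclaimed edge. The game ends when Constructor cannot claim any more edges or all edges are claimed. The score is the number of copies of $H$ in Constructor's graph at the end. Constructor maximizes, Blocker minimizes; $g(n,H,F)$ denotes the score under optimal play by both. $S_k$ denotes the star with $k$ leaves (so being $S_{k+1}$-free means maximum degree at most $k$). *)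

theory Defs
  imports Main "HOL-Library.Landau_Symbols"
begin

definition Kn_edges :: "nat \<Rightarrow> nat set set" where
  "Kn_edges n = {e. e \<subseteq> {0..<n} \<and> card e = 2}"

text \<open>Value of the Constructor-Blocker game from a position.
  ok: allowed Constructor graphs (F-freeness), sc: score of Constructor's graph,
  E: edge set of the board, turn = True means Constructor to move,
  C / B: edges claimed by Constructor / Blocker.  The fuel argument bounds the
  number of remaining moves (card E suffices since every move claims a new edge).\<close>
primrec play :: "nat \<Rightarrow> (nat set set \<Rightarrow> bool) \<Rightarrow> (nat set set \<Rightarrow> nat) \<Rightarrow> nat set set
    \<Rightarrow> bool \<Rightarrow> nat set set \<Rightarrow> nat set set \<Rightarrow> nat" where
  "play 0 ok sc E turn C B = sc C"
| "play (Suc m) ok sc E turn C B =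
    (let free = E - C - B; legal = {e \<in> free. ok (insert e C)} in
     if legal = {} then sc C
     else if turn then Max ((\<lambda>e. play m ok sc E False (insert e C) B) ` legal)
     else Min ((\<lambda>e. play m ok sc E True C (insert e B)) ` free))"

definition game_value :: "nat \<Rightarrow> (nat set set \<Rightarrow> bool) \<Rightarrow> (nat set set \<Rightarrow> nat) \<Rightarrow> nat" where
  "game_value n ok sc = play (card (Kn_edges n)) ok sc (Kn_edges n) True {} {}"

definition triangle_count :: "nat set set \<Rightarrow> nat" where
  "triangle_count G = card {T. card T = 3 \<and> (\<forall>x\<in>T. \<forall>y\<in>T. x \<noteq> y \<longrightarrow> {x, y} \<in> G)}"

text \<open>S_{k+1}-free, i.e. maximum degree at most k.\<close>
definition star_free :: "nat \<Rightarrow> nat set set \<Rightarrow> bool" where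
  "star_free k G \<longleftrightarrow> (\<forall>v. card {e \<in> G. v \<in> e} \<le> k)"

definition g_K3_star :: "nat \<Rightarrow> nat \<Rightarrow> nat" where
  "g_K3_star n k = game_value n (star_free k) triangle_count"

end

theory Submission
  imports Defs
begin


definition blk :: "nat \<Rightarrow> nat \<Rightarrow> nat set" where "blk b j = {j*b..<Suc j*b}"
definition BE :: "nat \<Rightarrow> nat \<Rightarrow> nat set set" where
  "BE b q = (\<Union>j<q. {e. e \<subseteq> blk b j \<and> card e = 2})"
definition Tri :: "nat \<Rightarrow> nat \<Rightarrow> nat set set" where
  "Tri b q = (\<Union>j<q. {T. T \<subseteq> blk b j \<and> card T = 3})"
definition edg :: "nat set \<Rightarrow> nat set set" where "edg T = {e. e \<subseteq> T \<and> card e = 2}"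
definition wt :: "nat set set \<Rightarrow> nat set \<Rightarrow> int" where "wt C T = 2 ^ card (edg T \<inter> C)"
definition Psi :: "nat \<Rightarrow> nat \<Rightarrow> nat set set \<Rightarrow> nat set set \<Rightarrow> int" where
  "Psi b q C B = (\<Sum>T\<in>{T\<in>Tri b q. edg T \<inter> B = {}}. wt C T)"
definition ww :: "nat \<Rightarrow> nat \<Rightarrow> nat set set \<Rightarrow> nat set set \<Rightarrow> nat set \<Rightarrow> int" where
  "ww b q C B f = (\<Sum>T\<in>{T\<in>Tri b q. edg T \<inter> B = {} \<and> f \<in> edg T}. wt C T)"

lemma finite_Tri: "finite (Tri b q)"
  unfolding Tri_def
proof (intro finite_UN_I)
  fix j show "finite {T. T \<subseteq> blk b j \<and> card T = 3}"
    by (rule finite_subset[of _ "Pow (blk b j)"]) (auto simp: blk_def)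
qed simp

lemma finite_BE: "finite (BE b q)"
  unfolding BE_def
proof (intro finite_UN_I)
  fix j show "finite {T. T \<subseteq> blk b j \<and> card T = 2}"
    by (rule finite_subset[of _ "Pow (blk b j)"]) (auto simp: blk_def)
qed simp

lemma Tri_card: "T \<in> Tri b q \<Longrightarrow> finite T \<and> card T = 3"
  unfolding Tri_def by (auto intro: card_ge_0_finite)

lemma card_edg: "T \<in> Tri b q \<Longrightarrow> card (edg T) = 3"
  using Tri_card[of T b q] n_subsets[of T 2] unfolding edg_def by (simp add: numeral_eq_Suc)

lemma finite_edg: "T \<in> Tri b q \<Longrightarrow> finite (edg T)"
  using Tri_card[of T b q] unfolding edg_def by (auto intro: finite_subset[of _ "Pow T"])

lemma edg_BE: "T \<in> Tri b q \<Longrightarrow> edg T \<subseteq> BE b q"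
  unfolding Tri_def BE_def edg_def by blast

lemma wt_le: "T \<in> Tri b q \<Longrightarrow> wt C T \<le> 8"
proof -
  assume T: "T \<in> Tri b q"
  have "card (edg T \<inter> C) \<le> 3" using card_edg[OF T] finite_edg[OF T]
    by (metis card_mono inf_le1)
  then have "(2::int) ^ card (edg T \<inter> C) \<le> 2 ^ 3" by (intro power_increasing) auto
  then show ?thesis by (simp add: wt_def)
qed

lemma wt_pos: "0 < wt C T" by (simp add: wt_def)

lemma two_edges:
  assumes T: "T \<in> Tri b q" and e: "e \<in> edg T" and f: "f \<in> edg T" and ne: "e \<noteq> f"
  shows "T = e \<union> f"
proof -
  have fin: "finite T" "card T = 3" using Tri_card[OF T] by auto
  have sub: "e \<union> f \<subseteq> T" using e f by (auto simp: edg_def)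
  have ce: "card e = 2" "card f = 2" using e f by (auto simp: edg_def)
  have fe: "finite e" "finite f" using sub fin finite_subset by auto
  have "\<not> f \<subseteq> e" using card_subset_eq[of e f] ce fe ne by auto
  then have "e \<subset> e \<union> f" by auto
  then have "card e < card (e \<union> f)" using fe by (intro psubset_card_mono) auto
  then have "card T \<le> card (e \<union> f)" using ce fin by simp
  moreover have "card (e \<union> f) \<le> card T" using sub fin by (intro card_mono) auto
  ultimately have "card (e \<union> f) = card T" by simp
  then show ?thesis using sub fin card_subset_eq[of T "e \<union> f"] by auto
qed

lemma sum_ins:
  assumes S: "S \<subseteq> Tri b q" and eC: "e \<notin> C"
  shows "(\<Sum>T\<in>S. wt (insert e C) T) = (\<Sum>T\<in>S. wt C T) + (\<Sum>T\<in>{T\<in>S. e \<in> edg T}. wt C T)"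
proof -
  have finS: "finite S" using finite_subset[OF S finite_Tri] .
  have "\<And>T. T \<in> S \<Longrightarrow> wt (insert e C) T = wt C T + (if e \<in> edg T then wt C T else 0)"
  proof -
    fix T assume "T \<in> S"
    then have fT: "finite (edg T)" using S finite_edg by auto
    show "wt (insert e C) T = wt C T + (if e \<in> edg T then wt C T else 0)"
    proof (cases "e \<in> edg T")
      case True
      then have "edg T \<inter> insert e C = insert e (edg T \<inter> C)" by auto
      moreover have "card (insert e (edg T \<inter> C)) = Suc (card (edg T \<inter> C))"
        using fT eC by simp
      ultimately show ?thesis using True by (simp add: wt_def)
    next
      case False
      then have "edg T \<inter> insert e C = edg T \<inter> C" by auto
      then show ?thesis using False by (simp add: wt_def)
    qed
  qed
  then have "(\<Sum>T\<in>S. wt (insert e C) T) = (\<Sum>T\<in>S. wt C T + (if e \<in> edg T then wt C T else 0))"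
    by (rule sum.cong[OF refl])
  also have "\<dots> = (\<Sum>T\<in>S. wt C T) + (\<Sum>T\<in>S. (if e \<in> edg T then wt C T else 0))"
    by (rule sum.distrib)
  also have "(\<Sum>T\<in>S. (if e \<in> edg T then wt C T else 0)) = (\<Sum>T\<in>{T\<in>S. e \<in> edg T}. wt C T)"
    using finS by (simp add: sum.inter_filter)
  finally show ?thesis .
qed

lemma Psi_ins: "e \<notin> C \<Longrightarrow> Psi b q (insert e C) B = Psi b q C B + ww b q C B e"
  unfolding Psi_def ww_def
  by (subst sum_ins[of _ b q]) (auto intro!: sum.cong)

lemma Psi_B: "Psi b q C (insert f B) = Psi b q C B - ww b q C B f"
proof -
  let ?A = "{T\<in>Tri b q. edg T \<inter> B = {}}"
  let ?F = "{T\<in>Tri b q. edg T \<inter> B = {} \<and> f \<in> edg T}"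
  have "{T\<in>Tri b q. edg T \<inter> insert f B = {}} = ?A - ?F" by auto
  moreover have "finite ?A" using finite_Tri by auto
  moreover have "?F \<subseteq> ?A" by auto
  ultimately show ?thesis unfolding Psi_def ww_def
    using sum.subset_diff[of ?F ?A "wt C"] by simp
qed

lemma ww_nonneg: "0 \<le> ww b q C B f"
  unfolding ww_def by (intro sum_nonneg) (simp add: wt_pos less_imp_le)

lemma ww_notBE: "f \<notin> BE b q \<Longrightarrow> ww b q C B f = 0"
proof -
  assume "f \<notin> BE b q"
  then have "{T\<in>Tri b q. edg T \<inter> B = {} \<and> f \<in> edg T} = {}" using edg_BE by blast
  then show ?thesis unfolding ww_def by (metis sum.empty)
qed

lemma ww_ins:
  assumes eC: "e \<notin> C" and ne: "f \<noteq> e"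
  shows "ww b q (insert e C) B f \<le> ww b q C B f + 8"
proof -
  let ?S = "{T\<in>Tri b q. edg T \<inter> B = {} \<and> f \<in> edg T}"
  let ?G = "{T\<in>?S. e \<in> edg T}"
  have "ww b q (insert e C) B f = ww b q C B f + (\<Sum>T\<in>?G. wt C T)"
    unfolding ww_def by (rule sum_ins) (use eC in auto)
  moreover have "(\<Sum>T\<in>?G. wt C T) \<le> 8"
  proof -
    have "?G \<subseteq> {e \<union> f}" using two_edges ne by blast
    then have c: "card ?G \<le> 1" using card_mono[of "{e \<union> f}" ?G] by simp
    have "(\<Sum>T\<in>?G. wt C T) \<le> of_nat (card ?G) * 8"
      by (rule sum_bounded_above) (auto intro: wt_le)
    also have "\<dots> \<le> 8" using c by simp
    finally show ?thesis .
  qed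
  ultimately show ?thesis by simp
qed



lemma blk_lt: "j < q \<Longrightarrow> q * b \<le> n \<Longrightarrow> x \<in> blk b j \<Longrightarrow> x < n"
proof -
  assume a: "j < q" "q * b \<le> n" "x \<in> blk b j"
  have "Suc j * b \<le> q * b" using a(1) by (intro mult_le_mono1) simp
  then show ?thesis using a by (auto simp: blk_def)
qed

lemma BE_sub: "q * b \<le> n \<Longrightarrow> BE b q \<subseteq> Kn_edges n"
  unfolding BE_def Kn_edges_def using blk_lt by fastforce

lemma blk_div: "x \<in> blk b j \<Longrightarrow> x div b = j"
  unfolding blk_def by (intro div_nat_eqI) (auto simp: mult.commute)

lemma star_BE:
  assumes G: "G \<subseteq> BE (Suc k) q"
  shows "star_free k G"
  unfolding star_free_def
proof
  fix v
  let ?j = "v div Suc k"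
  have "{e \<in> G. v \<in> e} \<subseteq> (\<lambda>u. {v, u}) ` (blk (Suc k) ?j - {v})"
  proof
    fix e assume e: "e \<in> {e \<in> G. v \<in> e}"
    then obtain j where j: "e \<subseteq> blk (Suc k) j" "card e = 2" using G unfolding BE_def by blast
    then obtain x y where xy: "e = {x, y}" "x \<noteq> y" by (auto simp: card_2_iff)
    have vj: "?j = j" using e j blk_div by blast
    show "e \<in> (\<lambda>u. {v, u}) ` (blk (Suc k) ?j - {v})"
    proof (cases "x = v")
      case True
      then show ?thesis using xy j vj by (auto intro!: image_eqI[of _ _ y])
    next
      case False
      then have "y = v" using e xy by auto
      then show ?thesis using xy j vj False by (auto intro!: image_eqI[of _ _ x])
    qed
  qed
  moreover have "card (blk (Suc k) ?j - {v}) = k"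
  proof -
    have l: "?j * Suc k \<le> v" by (rule div_times_less_eq_dividend)
    have u: "v < Suc ?j * Suc k"
    proof -
      have m: "v mod Suc k < Suc k" by simp
      have d: "v div Suc k * Suc k + v mod Suc k = v" by (rule div_mult_mod_eq)
      show ?thesis using m d by (simp only: mult_Suc)
    qed
    have "v \<in> blk (Suc k) ?j" unfolding blk_def using l u by simp
    then show ?thesis by (simp add: blk_def)
  qed
  moreover have fin: "finite (blk (Suc k) ?j - {v})" by (simp add: blk_def)
  ultimately show "card {e \<in> G. v \<in> e} \<le> k"
    using card_mono[OF finite_imageI[OF fin]] card_image_le[OF fin, of "\<lambda>u. {v, u}"]
    by fastforce
qed



lemma play_mono:
  assumes fin: "finite E" and mono: "\<And>C e. C \<subseteq> E \<Longrightarrow> e \<in> E \<Longrightarrow> sc C \<le> sc (insert e C)"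
  shows "C \<subseteq> E \<Longrightarrow> sc C \<le> play m ok sc E turn C B"
proof (induction m arbitrary: turn C B)
  case 0 show ?case by simp
next
  case (Suc m)
  let ?free = "E - C - B"
  let ?legal = "{e \<in> ?free. ok (insert e C)}"
  show ?case
  proof (cases "?legal = {}")
    case True then show ?thesis by (auto simp: Let_def)
  next
    case lne: False
    then obtain e where e: "e \<in> ?legal" by blast
    show ?thesis
    proof (cases turn)
      case True
      have "sc C \<le> sc (insert e C)" using mono Suc.prems e by auto
      also have "\<dots> \<le> play m ok sc E False (insert e C) B" using Suc.IH Suc.prems e by auto
      also have "\<dots> \<le> Max ((\<lambda>e. play m ok sc E False (insert e C) B) ` ?legal)"
        using fin e by (intro Max_ge) auto
      finally show ?thesis using lne True by (simp add: Let_def)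
    next
      case tF: False
      have fne: "?free \<noteq> {}" using e by auto
      have "sc C \<le> Min ((\<lambda>e. play m ok sc E True C (insert e B)) ` ?free)"
        using fin fne Suc.IH Suc.prems by (subst Min_ge_iff) auto
      then show ?thesis using lne tF by (simp add: Let_def)
    qed
  qed
qed

lemma tc_finite:
  assumes C: "C \<subseteq> Kn_edges n"
  shows "finite {T. card T = 3 \<and> (\<forall>x\<in>T. \<forall>y\<in>T. x \<noteq> y \<longrightarrow> {x, y} \<in> C)}"
proof (rule finite_subset[of _ "Pow {0..<n}"])
  show "{T. card T = 3 \<and> (\<forall>x\<in>T. \<forall>y\<in>T. x \<noteq> y \<longrightarrow> {x, y} \<in> C)} \<subseteq> Pow {0..<n}"
  proof
    fix T assume T: "T \<in> {T. card T = 3 \<and> (\<forall>x\<in>T. \<forall>y\<in>T. x \<noteq> y \<longrightarrow> {x, y} \<in> C)}"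
    have fT: "finite T" using T by (auto intro: card_ge_0_finite)
    have "x < n" if x: "x \<in> T" for x
    proof -
      have "card (T - {x}) = 2" using T x fT by (simp add: card_Diff_singleton)
      then obtain y where y: "y \<in> T" "y \<noteq> x" by (metis card_2_iff Diff_iff insertI1 singletonD)
      then have "{x,y} \<in> Kn_edges n" using T x C by auto
      then show "x < n" by (auto simp: Kn_edges_def)
    qed
    then show "T \<in> Pow {0..<n}" by auto
  qed
qed simp

lemma tc_mono:
  assumes "C \<subseteq> C'" "C' \<subseteq> Kn_edges n"
  shows "triangle_count C \<le> triangle_count C'"
  unfolding triangle_count_def
  by (rule card_mono[OF tc_finite[OF assms(2)]]) (use assms(1) in blast)

lemma final_le:
  assumes C: "C \<subseteq> Kn_edges n" and full: "BE b q \<subseteq> C \<union> B"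
  shows "Psi b q C B \<le> 8 * int (triangle_count C)"
proof -
  let ?A = "{T\<in>Tri b q. edg T \<inter> B = {}}"
  have w8: "wt C T = 8" if T: "T \<in> ?A" for T
  proof -
    have "edg T \<subseteq> C" using T edg_BE[of T b q] full by blast
    then have "edg T \<inter> C = edg T" by blast
    then show ?thesis using card_edg[of T b q] T by (simp add: wt_def)
  qed
  have "Psi b q C B = (\<Sum>T\<in>?A. 8)" unfolding Psi_def using w8 by (intro sum.cong) auto
  also have "\<dots> = 8 * int (card ?A)" by simp
  also have "card ?A \<le> triangle_count C"
    unfolding triangle_count_def
  proof (rule card_mono[OF tc_finite[OF C]])
    show "?A \<subseteq> {T. card T = 3 \<and> (\<forall>x\<in>T. \<forall>y\<in>T. x \<noteq> y \<longrightarrow> {x, y} \<in> C)}"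
    proof
      fix T assume T: "T \<in> ?A"
      have c3: "card T = 3" using T Tri_card by auto
      have "{x, y} \<in> C" if "x \<in> T" "y \<in> T" "x \<noteq> y" for x y
      proof -
        have "{x, y} \<in> edg T" using that by (auto simp: edg_def)
        then show ?thesis using T edg_BE[of T b q] full by blast
      qed
      then show "T \<in> {T. card T = 3 \<and> (\<forall>x\<in>T. \<forall>y\<in>T. x \<noteq> y \<longrightarrow> {x, y} \<in> C)}" using c3 by auto
    qed
  qed
  ultimately show ?thesis by linarith
qed



lemma finite_Kn: "finite (Kn_edges n)"
  unfolding Kn_edges_def by (rule finite_subset[of _ "Pow {0..<n}"]) auto

lemma main:
  fixes n k q :: nat
  assumes qn: "q * Suc k \<le> n"
  shows "C \<subseteq> BE (Suc k) q \<Longrightarrow> card (Kn_edges n - C - B) \<le> m \<Longrightarrow>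
    (Psi (Suc k) q C B - 8 * int (card (BE (Suc k) q - C - B))
       \<le> 8 * int (play m (star_free k) triangle_count (Kn_edges n) True C B))
    \<and> (\<forall>M. 0 \<le> M \<longrightarrow> (\<forall>f\<in>BE (Suc k) q - C - B. ww (Suc k) q C B f \<le> M) \<longrightarrow>
        Psi (Suc k) q C B - M - 8 * int (card (BE (Suc k) q - C - B))
          \<le> 8 * int (play m (star_free k) triangle_count (Kn_edges n) False C B))"
proof (induction m arbitrary: C B)
  let ?E = "Kn_edges n"
  let ?BE = "BE (Suc k) q"
  let ?p = "play :: nat \<Rightarrow> _ \<Rightarrow> _ \<Rightarrow> _ \<Rightarrow> _ \<Rightarrow> _ \<Rightarrow> _ \<Rightarrow> nat"
  have BEE: "?BE \<subseteq> ?E" using BE_sub qn by blast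
  have base: "Psi (Suc k) q C B \<le> 8 * int (play m (star_free k) triangle_count ?E turn C B)"
    if C: "C \<subseteq> ?BE" and full: "?BE - C - B = {}" for C B m turn
  proof -
    have CE: "C \<subseteq> ?E" using C BEE by blast
    have "Psi (Suc k) q C B \<le> 8 * int (triangle_count C)"
      using final_le[OF CE] full by blast
    moreover have "triangle_count C \<le> play m (star_free k) triangle_count ?E turn C B"
      by (rule play_mono[OF finite_Kn _ CE]) (rule tc_mono, auto)
    ultimately show ?thesis by linarith
  qed
  {
    case 0
    then have "?E - C - B = {}" using finite_Kn by simp
    then have full: "?BE - C - B = {}" using BEE by blast
    have h1: "Psi (Suc k) q C B \<le> 8 * int (play 0 (star_free k) triangle_count ?E True C B)"
      by (rule base[OF 0(1) full])
    have h2: "Psi (Suc k) q C B \<le> 8 * int (play 0 (star_free k) triangle_count ?E False C B)"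
      by (rule base[OF 0(1) full])
    show ?case
    proof (intro conjI allI impI)
      show "Psi (Suc k) q C B - 8 * int (card (?BE - C - B)) \<le> 8 * int (play 0 (star_free k) triangle_count ?E True C B)"
        using h1 full by simp
      fix M :: int assume "0 \<le> M"
      then show "Psi (Suc k) q C B - M - 8 * int (card (?BE - C - B)) \<le> 8 * int (play 0 (star_free k) triangle_count ?E False C B)"
        using h2 full by simp
    qed
  }
  {
    case (Suc m)
    show ?case
    proof (cases "?BE - C - B = {}")
      case True
      have h1: "Psi (Suc k) q C B \<le> 8 * int (play (Suc m) (star_free k) triangle_count ?E True C B)"
        by (rule base[OF Suc.prems(1) True])
      have h2: "Psi (Suc k) q C B \<le> 8 * int (play (Suc m) (star_free k) triangle_count ?E False C B)"
        by (rule base[OF Suc.prems(1) True])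
      show ?thesis
      proof (intro conjI allI impI)
        show "Psi (Suc k) q C B - 8 * int (card (?BE - C - B)) \<le> 8 * int (play (Suc m) (star_free k) triangle_count ?E True C B)"
          using h1 True by simp
        fix M :: int assume "0 \<le> M"
        then show "Psi (Suc k) q C B - M - 8 * int (card (?BE - C - B)) \<le> 8 * int (play (Suc m) (star_free k) triangle_count ?E False C B)"
          using h2 True by simp
      qed
    next
      case False
      let ?S = "?BE - C - B"
      have finS: "finite ?S" using finite_BE by blast
      obtain e0 where e0: "e0 \<in> ?S" using False by blast
      have legal_ne: "{e \<in> ?E - C - B. star_free k (insert e C)} \<noteq> {}"
      proof -
        have "star_free k (insert e0 C)" using e0 Suc.prems(1) by (intro star_BE) auto
        then show ?thesis using e0 BEE by blast
      qed
      have finE: "finite (?E - C - B)" using finite_Kn by blast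
      have conj1: "Psi (Suc k) q C B - 8 * int (card ?S)
          \<le> 8 * int (play (Suc m) (star_free k) triangle_count ?E True C B)"
      proof -
        let ?w = "ww (Suc k) q C B"
        obtain e where e: "e \<in> ?S" and emax: "\<forall>f\<in>?S. ?w f \<le> ?w e"
        proof -
          have "Max (?w ` ?S) \<in> ?w ` ?S" using finS False by (intro Max_in) auto
          then obtain e where "e \<in> ?S" "?w e = Max (?w ` ?S)" by auto
          moreover have "\<forall>f\<in>?S. ?w f \<le> Max (?w ` ?S)" using finS by auto
          ultimately show ?thesis using that by auto
        qed
        have eC: "e \<notin> C" using e by blast
        have eleg: "e \<in> {e \<in> ?E - C - B. star_free k (insert e C)}"
          using e BEE Suc.prems(1) by (auto intro: star_BE)
        have C': "insert e C \<subseteq> ?BE" using e Suc.prems(1) by blast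
        have cardE: "card (?E - insert e C - B) \<le> m"
        proof -
          have "?E - insert e C - B = (?E - C - B) - {e}" by blast
          moreover have "e \<in> ?E - C - B" using eleg by blast
          ultimately show ?thesis using Suc.prems(2) finE by (simp add: card_Diff_singleton)
        qed
        have IH: "Psi (Suc k) q (insert e C) B - (?w e + 8) - 8 * int (card (?BE - insert e C - B))
          \<le> 8 * int (play m (star_free k) triangle_count ?E False (insert e C) B)"
        proof -
          have "\<forall>f\<in>?BE - insert e C - B. ww (Suc k) q (insert e C) B f \<le> ?w e + 8"
          proof
            fix f assume f: "f \<in> ?BE - insert e C - B"
            then have "ww (Suc k) q (insert e C) B f \<le> ?w f + 8" using eC by (intro ww_ins) auto
            also have "?w f \<le> ?w e" using emax f by blast
            finally show "ww (Suc k) q (insert e C) B f \<le> ?w e + 8" by simp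
          qed
          moreover have "0 \<le> ?w e + 8" using ww_nonneg[of "Suc k" q C B e] by simp
          ultimately show ?thesis using Suc.IH[OF C' cardE] by blast
        qed
        have cS: "card (?BE - insert e C - B) = card ?S - 1"
        proof -
          have "?BE - insert e C - B = ?S - {e}" by blast
          then show ?thesis using e finS by (simp add: card_Diff_singleton)
        qed
        have cS1: "card ?S \<ge> 1" using e finS by (metis One_nat_def Suc_leI card_gt_0_iff empty_iff)
        have "play m (star_free k) triangle_count ?E False (insert e C) B
           \<le> Max ((\<lambda>e. play m (star_free k) triangle_count ?E False (insert e C) B) ` {e \<in> ?E - C - B. star_free k (insert e C)})"
          using eleg finite_Kn[of n] by (intro Max_ge) auto
        also have "\<dots> = play (Suc m) (star_free k) triangle_count ?E True C B"
          using legal_ne by (auto simp: Let_def)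
        finally have pl: "play m (star_free k) triangle_count ?E False (insert e C) B \<le> play (Suc m) (star_free k) triangle_count ?E True C B" .
        have "Psi (Suc k) q (insert e C) B = Psi (Suc k) q C B + ?w e" using Psi_ins[OF eC] .
        then show ?thesis using IH cS cS1 pl by (simp add: of_nat_diff)
      qed
      have conj2: "Psi (Suc k) q C B - M - 8 * int (card ?S)
          \<le> 8 * int (play (Suc m) (star_free k) triangle_count ?E False C B)"
        if M0: "0 \<le> M" and Mb: "\<forall>f\<in>?S. ww (Suc k) q C B f \<le> M" for M
      proof -
        let ?h = "\<lambda>e. play m (star_free k) triangle_count ?E True C (insert e B)"
        have fne: "?E - C - B \<noteq> {}" using legal_ne by blast
        have "Min (?h ` (?E - C - B)) \<in> ?h ` (?E - C - B)" using finE fne by (intro Min_in) auto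
        then obtain f where f: "f \<in> ?E - C - B" and hf: "Min (?h ` (?E - C - B)) = ?h f" by auto
        have pv: "play (Suc m) (star_free k) triangle_count ?E False C B = ?h f"
          using legal_ne hf by (auto simp: Let_def)
        have cardE: "card (?E - C - insert f B) \<le> m"
        proof -
          have "?E - C - insert f B = (?E - C - B) - {f}" by blast
          then show ?thesis using f Suc.prems(2) finE by (simp add: card_Diff_singleton)
        qed
        have IH: "Psi (Suc k) q C (insert f B) - 8 * int (card (?BE - C - insert f B)) \<le> 8 * int (?h f)"
          using Suc.IH[OF Suc.prems(1) cardE] by blast
        have wf: "ww (Suc k) q C B f \<le> M"
        proof (cases "f \<in> ?BE")
          case True then show ?thesis using Mb f by blast
        next
          case False then show ?thesis using ww_notBE M0 by simp
        qed
        have cle: "card (?BE - C - insert f B) \<le> card ?S" using finS by (intro card_mono) auto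
        show ?thesis using IH Psi_B[of "Suc k" q C f B] wf cle pv by linarith
      qed
      show ?thesis using conj1 conj2 by blast
    qed
  }
qed



lemma c2: "2 * real (Suc k choose 2) = (real k + 1) * real k"
proof (induction k)
  case 0 then show ?case by simp
next
  case (Suc k)
  have "(Suc (Suc k) choose 2) = (Suc k choose 1) + (Suc k choose 2)"
    by (simp add: numeral_2_eq_2)
  then show ?case using Suc by (simp add: algebra_simps)
qed

lemma c3: "6 * real (Suc k choose 3) = (real k + 1) * real k * (real k - 1)"
proof (induction k)
  case 0 then show ?case by (simp add: numeral_3_eq_3)
next
  case (Suc k)
  have "(Suc (Suc k) choose 3) = (Suc k choose 2) + (Suc k choose 3)"
    by (simp add: numeral_3_eq_3 numeral_2_eq_2)
  then show ?case using Suc c2[of k] by (simp add: algebra_simps)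
qed

lemma card_blk: "card (blk b j) = b" by (simp add: blk_def)

lemma card_Tri: "card (Tri b q) = q * (b choose 3)"
proof -
  have "card (Tri b q) = (\<Sum>j<q. card {T. T \<subseteq> blk b j \<and> card T = 3})"
    unfolding Tri_def
  proof (rule card_UN_disjoint)
    show "\<forall>i\<in>{..<q}. finite {T. T \<subseteq> blk b i \<and> card T = 3}"
    proof
      fix i :: nat show "finite {T. T \<subseteq> blk b i \<and> card T = 3}"
        by (rule finite_subset[of _ "Pow (blk b i)"]) (auto simp: blk_def)
    qed
    show "\<forall>i\<in>{..<q}. \<forall>j\<in>{..<q}. i \<noteq> j \<longrightarrow>
      {T. T \<subseteq> blk b i \<and> card T = 3} \<inter> {T. T \<subseteq> blk b j \<and> card T = 3} = {}"
    proof (intro ballI impI)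
      fix i j :: nat assume "i \<noteq> j"
      then have "blk b i \<inter> blk b j = {}" using blk_div by blast
      show "{T. T \<subseteq> blk b i \<and> card T = 3} \<inter> {T. T \<subseteq> blk b j \<and> card T = 3} = {}"
      proof (rule ccontr)
        assume "{T. T \<subseteq> blk b i \<and> card T = 3} \<inter> {T. T \<subseteq> blk b j \<and> card T = 3} \<noteq> {}"
        then obtain T where "T \<subseteq> blk b i" "T \<subseteq> blk b j" "card T = 3" by blast
        then have "T = {}" using \<open>blk b i \<inter> blk b j = {}\<close> by blast
        then show False using \<open>card T = 3\<close> by simp
      qed
    qed
  qed simp
  also have "\<dots> = (\<Sum>j<q. b choose 3)"
    using n_subsets[of "blk b _" 3] by (simp add: blk_def)
  finally show ?thesis by simp
qed

lemma card_BE: "card (BE b q) \<le> q * (b choose 2)"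
proof -
  have "card (BE b q) \<le> (\<Sum>j<q. card {T. T \<subseteq> blk b j \<and> card T = 2})"
    unfolding BE_def by (rule card_UN_le) simp
  also have "\<dots> = (\<Sum>j<q. b choose 2)"
    using n_subsets[of "blk b _" 2] by (simp add: blk_def)
  finally show ?thesis by simp
qed

lemma g_bound:
  "8 * int (g_K3_star n k) \<ge> int (card (Tri (Suc k) (n div Suc k))) - 8 * int (card (BE (Suc k) (n div Suc k)))"
proof -
  let ?q = "n div Suc k"
  have qn: "?q * Suc k \<le> n" by (rule div_times_less_eq_dividend)
  have "Psi (Suc k) ?q {} {} - 8 * int (card (BE (Suc k) ?q - {} - {}))
       \<le> 8 * int (play (card (Kn_edges n)) (star_free k) triangle_count (Kn_edges n) True {} {})"
    using main[OF qn, of "{}" "{}" "card (Kn_edges n)"] by simp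
  moreover have "Psi (Suc k) ?q {} {} = int (card (Tri (Suc k) ?q))"
    unfolding Psi_def wt_def by simp
  ultimately show ?thesis by (simp add: g_K3_star_def game_value_def)
qed



lemma final_arith:
  fixes g n q K \<delta> :: real
  assumes d: "\<delta> * K \<ge> 26" and K25: "K \<ge> 25" and Kn: "K^2 \<le> n"
    and qK: "q*(K+1) \<ge> n - K" and g: "48 * g \<ge> q*(K+1)*K*(K-25)"
  shows "g \<ge> (1-\<delta>)*(n*K^2/48)"
proof -
  have p: "K*(K-25) \<ge> 0" using K25 by simp
  have "q*(K+1)*(K*(K-25)) \<ge> (n-K)*(K*(K-25))" using mult_right_mono[OF qK p] .
  then have a: "48 * g \<ge> (n-K)*(K*(K-25))" using g by (simp add: mult.assoc)
  have e: "(n-K)*(K*(K-25)) = n*K^2 - 25*(n*K) - K*K^2 + 25*K^2"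
    by (simp add: algebra_simps power2_eq_square)
  have b: "K*K^2 \<le> K*n" using Kn K25 by (intro mult_left_mono) auto
  have nK: "n*K \<ge> 0" using Kn K25 by (metis le_trans mult_nonneg_nonneg zero_le_power2 less_imp_le order.trans zero_le_numeral)
  have c0: "(\<delta>*K)*(n*K) \<ge> 26*(n*K)" using mult_right_mono[OF d nK] .
  have c: "\<delta>*(n*K^2) \<ge> 26*(n*K)" using c0 by (simp add: algebra_simps power2_eq_square)
  have "K*n = n*K" by simp
  have "K^2 \<ge> 0" by simp
  have "48 * g \<ge> n*K^2 - \<delta>*(n*K^2)" using a e b c \<open>K*n = n*K\<close> \<open>K^2 \<ge> 0\<close> by linarith
  then show ?thesis by (simp add: algebra_simps)
qed

lemma g_real_bound:
  "48 * real (g_K3_star n k) \<ge> real (n div Suc k) * (real k + 1) * real k * (real k - 25)"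
proof -
  let ?q = "n div Suc k"
  have g: "8 * int (g_K3_star n k) \<ge> int (card (Tri (Suc k) ?q)) - 8 * int (card (BE (Suc k) ?q))"
    by (rule g_bound)
  have "8 * real (g_K3_star n k) \<ge> real (card (Tri (Suc k) ?q)) - 8 * real (card (BE (Suc k) ?q))"
  proof -
    have "real_of_int (8 * int (g_K3_star n k)) \<ge> real_of_int (int (card (Tri (Suc k) ?q)) - 8 * int (card (BE (Suc k) ?q)))"
      using g by linarith
    then show ?thesis by simp
  qed
  moreover have "real (card (BE (Suc k) ?q)) \<le> real ?q * real (Suc k choose 2)"
    using card_BE[of "Suc k" ?q] by (metis of_nat_le_iff of_nat_mult)
  moreover have "real (card (Tri (Suc k) ?q)) = real ?q * real (Suc k choose 3)"
    using card_Tri[of "Suc k" ?q] by simp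
  ultimately have h: "8 * real (g_K3_star n k) \<ge> real ?q * real (Suc k choose 3) - 8 * (real ?q * real (Suc k choose 2))"
    by linarith
  have "48 * real (g_K3_star n k) \<ge> real ?q * (6 * real (Suc k choose 3)) - 24 * (real ?q * (2 * real (Suc k choose 2)))"
    using h by linarith
  then show ?thesis unfolding c2 c3 by (simp add: algebra_simps)
qed

theorem theorem1p5:
  fixes k :: "nat \<Rightarrow> nat"
  assumes "filterlim k at_top at_top"
    and "(\<lambda>n. real (k n)) \<in> o(\<lambda>n. sqrt (real n))"
  shows "\<forall>\<delta>>0. \<forall>\<^sub>F n in at_top.
           real (g_K3_star n (k n)) \<ge> (1 - \<delta>) * (real n * real (k n) ^ 2 / 48)"
proof (intro allI impI)
  fix \<delta> :: real assume dpos: "\<delta> > 0"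
  define N0 where "N0 = nat \<lceil>26/\<delta>\<rceil> + 25"
  have ev1: "\<forall>\<^sub>F n in at_top. N0 \<le> k n" using assms(1) by (simp add: filterlim_at_top)
  have ev2: "\<forall>\<^sub>F n in at_top. norm (real (k n)) \<le> 1 * norm (sqrt (real n))"
    using landau_o.smallD[OF assms(2), of 1] by simp
  show "\<forall>\<^sub>F n in at_top. real (g_K3_star n (k n)) \<ge> (1 - \<delta>) * (real n * real (k n) ^ 2 / 48)"
    using ev1 ev2
  proof eventually_elim
    case (elim n)
    let ?K = "real (k n)"
    let ?q = "n div Suc (k n)"
    have K25: "?K \<ge> 25" using elim(1) unfolding N0_def by simp
    have "?K \<ge> 26/\<delta>"
    proof -
      have a: "real (nat \<lceil>26/\<delta>\<rceil>) \<ge> 26/\<delta>" by linarith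
      have "nat \<lceil>26/\<delta>\<rceil> \<le> k n" using elim(1) unfolding N0_def by linarith
      then have "real (nat \<lceil>26/\<delta>\<rceil>) \<le> ?K" by (simp only: of_nat_le_iff)
      then show ?thesis using a by linarith
    qed
    then have d: "\<delta> * ?K \<ge> 26" using dpos by (simp add: field_simps)
    have Ks: "?K \<le> sqrt (real n)" using elim(2) by simp
    have Kn: "?K^2 \<le> real n"
    proof -
      have "?K^2 \<le> (sqrt (real n))^2" using Ks by (intro power_mono) auto
      then show ?thesis by simp
    qed
    have qK: "real ?q * (?K + 1) \<ge> real n - ?K"
    proof -
      have "n = ?q * Suc (k n) + n mod Suc (k n)" by (rule div_mult_mod_eq[symmetric])
      moreover have "n mod Suc (k n) \<le> k n" using mod_less_divisor[of "Suc (k n)" n] by linarith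
      ultimately have "n \<le> ?q * Suc (k n) + k n" by linarith
      then have "real n \<le> real ?q * (?K + 1) + ?K"
        by (metis of_nat_add of_nat_le_iff of_nat_mult of_nat_Suc add.commute)
      then show ?thesis by linarith
    qed
    show ?case
      using final_arith[OF d K25 Kn qK g_real_bound[of n "k n"]] .
  qed
qed


end
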